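(* Let $\mathcal{X},\mathcal{Y}\in\mathbb{R}^{d\times n}$, let $\mathcal{Y}^{T}\mathcal{X}=U\Sigma V^{T}$ be a singular value decomposition (with $U,V\in\mathbb{R}^{n\times n}$ orthogonal and $\Sigma$ diagonal with nonnegative entries), and set $Q^\ast=UV^{T}$ and $\mathcal{Y}_h=\mathcal{Y}Q^\ast$. Let $\mathcal{P}_n$ be the set of $n\times n$ permutation matrices. Then: (i) $Q^\ast$ minimizes $\|\mathcal{X}-\mathcal{Y}Q\|_F$ over all orthogonal $n\times n$ matrices $Q$, and hence $\|\mathcal{X}-\mathcal{Y}_h\|_F\le \min_{T\in\mathcal{P}_n}\|\mathcal{X}-\mathcal{Y}T\|_F$; (ii) the identity matrix $I_n$ minimizes $\|\mathcal{X}-\mathcal{Y}_hT\|_F$ over $T\in\mathcal{P}_n$.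
   Context: $\|\cdot\|_F$ is the Frobenius norm. A permutation matrix is a matrix $T\in\{0,1\}^{n\times n}$ with every row sum and every column sum equal to $1$. *)

theory Defs
  imports "HOL-Analysis.Analysis"
begin

definition frob_norm :: "real^'n^'m \<Rightarrow> real" where
  "frob_norm A = sqrt (\<Sum>i\<in>UNIV. \<Sum>j\<in>UNIV. (A $ i $ j)^2)"

definition perm_matrix :: "real^'n^'n \<Rightarrow> bool" where
  "perm_matrix T \<longleftrightarrow> (\<forall>i j. T $ i $ j \<in> {0,1})
     \<and> (\<forall>i. (\<Sum>j\<in>UNIV. T $ i $ j) = 1) \<and> (\<forall>j. (\<Sum>i\<in>UNIV. T $ i $ j) = 1)"

definition nonneg_diag :: "real^'n^'n \<Rightarrow> bool" where
  "nonneg_diag S \<longleftrightarrow> (\<forall>i j. i \<noteq> j \<longrightarrow> S $ i $ j = 0) \<and> (\<forall>i. S $ i $ i \<ge> 0)"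

end

theory Submission
  imports Defs
begin

lemma mm_sub_l: "(A::real^'n^'m) ** (B - C) = A ** B - A ** C"
  by (simp add: vec_eq_iff matrix_matrix_mult_def sum_subtractf[symmetric] algebra_simps)

lemma mm_sub_r: "((A::real^'n^'m) - B) ** C = A ** C - B ** C"
  by (simp add: vec_eq_iff matrix_matrix_mult_def sum_subtractf[symmetric] algebra_simps)

lemma transpose_sub: "transpose ((A::real^'n^'m) - B) = transpose A - transpose B"
  by (simp add: vec_eq_iff transpose_def)

lemma trace_transpose: "trace (transpose (A::real^'n^'n)) = trace A"
  by (simp add: trace_def transpose_def)

lemma frob_sq: "(frob_norm (A::real^'n^'m))^2 = trace (transpose A ** A)"
proof -
  have "(frob_norm A)^2 = (\<Sum>i\<in>UNIV. \<Sum>j\<in>UNIV. (A $ i $ j)^2)"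
    unfolding frob_norm_def by (simp add: sum_nonneg)
  also have "\<dots> = (\<Sum>j\<in>UNIV. \<Sum>i\<in>UNIV. (A $ i $ j)^2)" by (rule sum.swap)
  also have "\<dots> = trace (transpose A ** A)"
    by (simp add: trace_def matrix_matrix_mult_def transpose_def power2_eq_square)
  finally show ?thesis .
qed

lemma expand:
  fixes X Y :: "real^'n^'d" and Q :: "real^'n^'n"
  assumes "orthogonal_matrix Q"
  shows "(frob_norm (X - Y ** Q))^2
     = trace (transpose X ** X) + trace (transpose Y ** Y) - 2 * trace (transpose Q ** (transpose Y ** X))"
proof -
  have QQ: "Q ** transpose Q = mat 1" using assms by (simp add: orthogonal_matrix_def)
  have e: "transpose (X - Y ** Q) ** (X - Y ** Q)
     = transpose X ** X - transpose X ** (Y ** Q) - (transpose Q ** transpose Y) ** X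
       + (transpose Q ** transpose Y) ** (Y ** Q)"
    by (simp add: transpose_sub matrix_transpose_mul mm_sub_l mm_sub_r)
  have t1: "trace (transpose X ** (Y ** Q)) = trace (transpose Q ** (transpose Y ** X))"
  proof -
    have "transpose X ** (Y ** Q) = transpose (transpose Q ** (transpose Y ** X))"
      by (simp add: matrix_transpose_mul matrix_mul_assoc)
    then show ?thesis by (simp add: trace_transpose)
  qed
  have t2: "trace ((transpose Q ** transpose Y) ** X) = trace (transpose Q ** (transpose Y ** X))"
    by (simp add: matrix_mul_assoc)
  have t3: "trace ((transpose Q ** transpose Y) ** (Y ** Q)) = trace (transpose Y ** Y)"
  proof -
    have "trace ((transpose Q ** transpose Y) ** (Y ** Q)) = trace (transpose Q ** ((transpose Y ** Y) ** Q))"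
      by (simp add: matrix_mul_assoc)
    also have "\<dots> = trace (((transpose Y ** Y) ** Q) ** transpose Q)" by (rule trace_mul_sym)
    also have "\<dots> = trace (transpose Y ** Y)" by (metis QQ matrix_mul_assoc matrix_mul_rid)
    finally show ?thesis .
  qed
  show ?thesis unfolding frob_sq e trace_add trace_sub t1 t2 t3 by simp
qed

lemma trace_orth_diag:
  fixes W S :: "real^'n^'n"
  assumes "orthogonal_matrix W" "nonneg_diag S"
  shows "trace (W ** S) \<le> trace S"
proof -
  have WW: "transpose W ** W = mat 1" using assms(1) by (simp add: orthogonal_matrix_def)
  have le1: "W $ i $ i \<le> 1" for i
  proof -
    have "(transpose W ** W) $ i $ i = 1" using WW by (simp add: mat_def)
    hence s: "(\<Sum>k\<in>UNIV. (W $ k $ i)^2) = 1"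
      by (simp add: matrix_matrix_mult_def transpose_def power2_eq_square)
    have "(W $ i $ i)^2 \<le> (\<Sum>k\<in>UNIV. (W $ k $ i)^2)"
      by (rule member_le_sum) auto
    hence "(W $ i $ i)^2 \<le> 1" using s by simp
    thus ?thesis by (smt (verit) power2_eq_square mult_le_cancel_left1)
  qed
  have d: "(W ** S) $ i $ i = W $ i $ i * S $ i $ i" for i
  proof -
    have "(W ** S) $ i $ i = (\<Sum>k\<in>UNIV. W $ i $ k * S $ k $ i)"
      by (simp add: matrix_matrix_mult_def)
    also have "\<dots> = W $ i $ i * S $ i $ i"
      using assms(2) by (subst sum.cong[OF refl, where h="\<lambda>k. if k = i then W $ i $ i * S $ i $ i else 0"])
         (auto simp: nonneg_diag_def)
    finally show ?thesis .
  qed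
  have "trace (W ** S) = (\<Sum>i\<in>UNIV. W $ i $ i * S $ i $ i)" by (simp add: trace_def d)
  also have "\<dots> \<le> (\<Sum>i\<in>UNIV. S $ i $ i)"
  proof (rule sum_mono)
    fix i
    have "S $ i $ i \<ge> 0" using assms(2) by (simp add: nonneg_diag_def)
    thus "W $ i $ i * S $ i $ i \<le> S $ i $ i" using mult_right_mono[OF le1[of i]] by simp
  qed
  finally show ?thesis by (simp add: trace_def)
qed

lemma perm_orth:
  fixes T :: "real^'n^'n"
  assumes "perm_matrix T"
  shows "orthogonal_matrix T"
proof -
  have ent: "\<And>i j. T $ i $ j = 0 \<or> T $ i $ j = 1"
   and col: "\<And>j. (\<Sum>i\<in>UNIV. T $ i $ j) = 1"
    using assms by (auto simp: perm_matrix_def)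
  have "transpose T ** T = mat 1"
  proof (simp add: vec_eq_iff, intro allI)
    fix j k
    show "(transpose T ** T) $ j $ k = mat 1 $ j $ k"
    proof (cases "j = k")
      case True
      have "(transpose T ** T) $ j $ k = (\<Sum>i\<in>UNIV. T $ i $ j)"
        using True ent by (auto simp: matrix_matrix_mult_def transpose_def intro!: sum.cong)
      thus ?thesis using True col by (simp add: mat_def)
    next
      case False
      have "T $ i $ j * T $ i $ k = 0" for i
      proof (rule ccontr)
        assume "T $ i $ j * T $ i $ k \<noteq> 0"
        hence a: "T $ i $ j = 1" "T $ i $ k = 1" using ent by (metis mult_zero_left mult_zero_right)+
        have r: "(\<Sum>l\<in>UNIV. T $ i $ l) = 1" using assms by (simp add: perm_matrix_def)
        have nn: "\<And>l. T $ i $ l \<ge> 0" using ent by (metis order.refl zero_le_one)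
        have "(\<Sum>l\<in>{j,k}. T $ i $ l) \<le> (\<Sum>l\<in>UNIV. T $ i $ l)"
          by (rule sum_mono2) (auto simp: nn)
        thus False using a r False by simp
      qed
      hence "(\<Sum>i\<in>UNIV. T $ i $ j * T $ i $ k) = 0" by (intro sum.neutral) blast
      thus ?thesis using False by (simp add: matrix_matrix_mult_def transpose_def mat_def)
    qed
  qed
  thus ?thesis by (simp add: orthogonal_matrix)
qed

theorem mainTheorem2:
  fixes X Y :: "real^'n^'d" and U V S :: "real^'n^'n"
  assumes "orthogonal_matrix U" and "orthogonal_matrix V" and "nonneg_diag S"
    and "transpose Y ** X = U ** S ** transpose V"
  defines "Qs \<equiv> U ** transpose V"
  defines "Yh \<equiv> Y ** Qs"
  shows "(\<forall>Q. orthogonal_matrix Q \<longrightarrow> frob_norm (X - Y ** Qs) \<le> frob_norm (X - Y ** Q))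
       \<and> (\<forall>T. perm_matrix T \<longrightarrow> frob_norm (X - Yh) \<le> frob_norm (X - Y ** T))
       \<and> perm_matrix (mat 1 :: real^'n^'n)
       \<and> (\<forall>T. perm_matrix T \<longrightarrow> frob_norm (X - Yh ** mat 1) \<le> frob_norm (X - Yh ** T))"
proof -
  have oQs: "orthogonal_matrix Qs" unfolding Qs_def
    using assms(1,2) by (simp add: orthogonal_matrix_mul)
  have tr: "trace (transpose Q ** (transpose Y ** X)) = trace ((transpose V ** transpose Q ** U) ** S)" for Q
  proof -
    have "trace (transpose Q ** (transpose Y ** X)) = trace ((transpose Q ** U ** S) ** transpose V)"
      using assms(4) by (simp add: matrix_mul_assoc)
    also have "\<dots> = trace (transpose V ** (transpose Q ** U ** S))" by (rule trace_mul_sym)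
    also have "\<dots> = trace ((transpose V ** transpose Q ** U) ** S)" by (simp add: matrix_mul_assoc)
    finally show ?thesis .
  qed
  have VV: "transpose V ** V = mat 1" and UU: "transpose U ** U = mat 1"
    using assms(1,2) unfolding orthogonal_matrix_def by auto
  have "transpose V ** transpose Qs ** U = mat 1"
  proof -
    have "transpose Qs = V ** transpose U" unfolding Qs_def by (simp add: matrix_transpose_mul)
    hence "transpose V ** transpose Qs ** U = (transpose V ** V) ** (transpose U ** U)"
      by (simp add: matrix_mul_assoc)
    thus ?thesis by (simp add: UU VV)
  qed
  hence trQs: "trace (transpose Qs ** (transpose Y ** X)) = trace S" using tr[of Qs] by simp
  have opt: "frob_norm (X - Y ** Qs) \<le> frob_norm (X - Y ** Q)" if oQ: "orthogonal_matrix Q" for Q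
  proof -
    have "orthogonal_matrix (transpose V ** transpose Q ** U)"
      using assms(1,2) oQ by (simp add: orthogonal_matrix_mul)
    hence "trace (transpose Q ** (transpose Y ** X)) \<le> trace S"
      using tr[of Q] trace_orth_diag assms(3) by metis
    hence "(frob_norm (X - Y ** Qs))^2 \<le> (frob_norm (X - Y ** Q))^2"
      using expand[OF oQ, of X Y] expand[OF oQs, of X Y] trQs by simp
    thus ?thesis by (simp add: frob_norm_def power2_le_iff_abs_le sum_nonneg)
  qed
  have pm1: "perm_matrix (mat 1 :: real^'n^'n)"
    by (simp add: perm_matrix_def mat_def)
  show ?thesis
  proof (intro conjI allI impI)
    fix Q :: "real^'n^'n" assume "orthogonal_matrix Q" thus "frob_norm (X - Y ** Qs) \<le> frob_norm (X - Y ** Q)" by (rule opt)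
  next
    fix T :: "real^'n^'n" assume "perm_matrix T"
    thus "frob_norm (X - Yh) \<le> frob_norm (X - Y ** T)" unfolding Yh_def by (intro opt perm_orth)
  next
    show "perm_matrix (mat 1 :: real^'n^'n)" by (rule pm1)
  next
    fix T :: "real^'n^'n" assume "perm_matrix T"
    hence "orthogonal_matrix (Qs ** T)" using oQs perm_orth orthogonal_matrix_mul by blast
    from opt[OF this] show "frob_norm (X - Yh ** mat 1) \<le> frob_norm (X - Yh ** T)"
      unfolding Yh_def by (simp add: matrix_mul_assoc)
  qed
qed

end
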